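(* For every sequence $S\in[n]^m$ and every finite set $X\subset\mathbb Q\setminus[n]$ of auxiliary elements, $\mathrm{OPT}(S)=\mathrm{OPT}_X(S)$.
   Context: Dynamic BST model on a finite key set $K\subset\mathbb Q$: an algorithm chooses an initial BST on $K$. To serve access $s_t$ it touches a set of nodes forming a connected subtree containing the root and $s_t$, may rearrange the touched nodes into any BST shape (untouched subtrees reattached validly), and pays the number of touched nodes. $\mathrm{OPT}(S)$ is the minimum total cost of serving $S$ over all offline algorithms with key set $K=[n]$. $\mathrm{OPT}_X(S)$ is the same minimum with key set $K=[n]\cup X$; the accesses are still the keys of $S$, all of which lie in $[n]$. *)

theory Defs
  imports Complex_Main "HOL-Library.Tree"
begin

text \<open>P is a connected subtree of t containing the root (or empty).\<close>
fun top_part :: "'a set \<Rightarrow> 'a tree \<Rightarrow> bool" where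
  "top_part P Leaf = (P = {})"
| "top_part P (Node l x r) =
     (P = {} \<or> (x \<in> P \<and> P \<subseteq> insert x (set_tree l \<union> set_tree r)
        \<and> top_part (P \<inter> set_tree l) l \<and> top_part (P \<inter> set_tree r) r))"

fun hanging :: "'a set \<Rightarrow> 'a tree \<Rightarrow> 'a tree set" where
  "hanging P Leaf = {}"
| "hanging P (Node l x r) =
     (if x \<in> P then hanging P l \<union> hanging P r else {Node l x r})"

text \<open>One access s: touch P (connected, containing root and s), rearrange P into any BST
  shape with the untouched subtrees reattached; cost = number of touched nodes.\<close>
definition bst_step :: "'a::linorder \<Rightarrow> 'a tree \<Rightarrow> 'a tree \<Rightarrow> nat \<Rightarrow> bool" where
  "bst_step s T T' c \<longleftrightarrow>
     (\<exists>P. s \<in> P \<and> top_part P T \<and> top_part P T' \<and> hanging P T' = hanging P T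
          \<and> bst T' \<and> set_tree T' = set_tree T \<and> c = card P)"

inductive serve :: "'a::linorder tree \<Rightarrow> 'a list \<Rightarrow> nat \<Rightarrow> bool" where
  serve_Nil: "serve T [] 0"
| serve_Cons: "bst_step s T T' c \<Longrightarrow> serve T' ss k \<Longrightarrow> serve T (s # ss) (c + k)"

definition serve_costs :: "'a::linorder set \<Rightarrow> 'a list \<Rightarrow> nat set" where
  "serve_costs K S = {c. \<exists>T. bst T \<and> set_tree T = K \<and> serve T S c}"

definition OPT_keys :: "'a::linorder set \<Rightarrow> 'a list \<Rightarrow> nat" where
  "OPT_keys K S = Inf (serve_costs K S)"

definition nset :: "nat \<Rightarrow> rat set" where
  "nset n = of_nat ` {1..n}"

definition OPT :: "nat \<Rightarrow> rat list \<Rightarrow> nat" where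
  "OPT n S = OPT_keys (nset n) S"

definition OPT_X :: "nat \<Rightarrow> rat set \<Rightarrow> rat list \<Rightarrow> nat" where
  "OPT_X n X S = OPT_keys (nset n \<union> X) S"

end

theory Submission
  imports Defs
begin

lemma top_part_sub: "top_part P t \<Longrightarrow> P \<subseteq> set_tree t"
  by (induction t arbitrary: P) auto

lemma hanging_cong: "(\<forall>z\<in>set_tree t. z \<in> P \<longleftrightarrow> z \<in> P') \<Longrightarrow> hanging P t = hanging P' t"
  by (induction t) auto

lemma top_part_cong: "top_part P t \<Longrightarrow> P' = P \<Longrightarrow> top_part P' t" by simp

lemma hanging_sub: "H \<in> hanging P t \<Longrightarrow> set_tree H \<subseteq> set_tree t \<and> H \<noteq> Leaf"
  by (induction t) (auto split: if_splits)

lemma hanging_disj: "top_part P t \<Longrightarrow> H \<in> hanging P t \<Longrightarrow> set_tree H \<inter> P = {}"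
proof (induction t arbitrary: P)
  case Leaf then show ?case by simp
next
  case (Node l y r)
  show ?case
  proof (cases "P = {}")
    case True then show ?thesis by simp
  next
    case False
    with Node.prems have y: "y \<in> P" and sub: "P \<subseteq> insert y (set_tree l \<union> set_tree r)"
      and tl: "top_part (P \<inter> set_tree l) l" and tr: "top_part (P \<inter> set_tree r) r" by auto
    from Node.prems(2) y have "H \<in> hanging P l \<or> H \<in> hanging P r" by auto
    then show ?thesis
    proof
      assume h: "H \<in> hanging P l"
      have "hanging P l = hanging (P \<inter> set_tree l) l" by (rule hanging_cong) auto
      with h Node.IH(1)[OF tl] hanging_sub[OF h] show ?thesis by auto
    next
      assume h: "H \<in> hanging P r"
      have "hanging P r = hanging (P \<inter> set_tree r) r" by (rule hanging_cong) auto
      with h Node.IH(2)[OF tr] hanging_sub[OF h] show ?thesis by auto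
    qed
  qed
qed

fun tins :: "'a::linorder \<Rightarrow> 'a tree \<Rightarrow> 'a tree" where
  "tins x Leaf = Node Leaf x Leaf"
| "tins x (Node l y r) = (if x < y then Node (tins x l) y r else if y < x then Node l y (tins x r) else Node l y r)"

lemma set_tins[simp]: "set_tree (tins x t) = insert x (set_tree t)"
  by (induction t) auto

lemma bst_tins: "bst t \<Longrightarrow> bst (tins x t)"
  by (induction t) auto

lemma tins_nonleaf[simp]: "tins x t \<noteq> Leaf"
  by (cases t) auto

lemma top_part_tins: "top_part P t \<Longrightarrow> x \<notin> P \<Longrightarrow> top_part P (tins x t)"
proof (induction t arbitrary: P)
  case Leaf then show ?case by simp
next
  case (Node l y r)
  show ?case
  proof (cases "P = {}")
    case True then show ?thesis by (cases "tins x (Node l y r)") auto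
  next
    case False
    with Node.prems have y: "y \<in> P" and sub: "P \<subseteq> insert y (set_tree l \<union> set_tree r)"
      and tl: "top_part (P \<inter> set_tree l) l" and tr: "top_part (P \<inter> set_tree r) r" by auto
    have e1: "P \<inter> set_tree (tins x l) = P \<inter> set_tree l" using Node.prems by auto
    have e2: "P \<inter> set_tree (tins x r) = P \<inter> set_tree r" using Node.prems by auto
    show ?thesis using y sub Node.IH(1)[OF tl] Node.IH(2)[OF tr] Node.prems e1 e2 tl tr by auto
  qed
qed

definition sg :: "'a::linorder set \<Rightarrow> 'a \<Rightarrow> 'a \<Rightarrow> bool" where
  "sg P x y \<longleftrightarrow> (\<forall>p\<in>P. p < x \<longleftrightarrow> p < y)"

definition gins :: "'a::linorder set \<Rightarrow> 'a \<Rightarrow> 'a tree \<Rightarrow> 'a tree" where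
  "gins P x H = (if (\<exists>z\<in>set_tree H. sg P x z) then tins x H else H)"

definition Fins :: "'a::linorder set \<Rightarrow> 'a \<Rightarrow> 'a tree set \<Rightarrow> 'a tree set" where
  "Fins P x hs = gins P x ` hs \<union> (if (\<exists>H\<in>hs. \<exists>z\<in>set_tree H. sg P x z) then {} else {Node Leaf x Leaf})"

lemma hanging_tins: "bst t \<Longrightarrow> top_part P t \<Longrightarrow> x \<notin> set_tree t \<Longrightarrow> x \<notin> P \<Longrightarrow>
  hanging P (tins x t) = Fins P x (hanging P t)"
proof (induction t arbitrary: P)
  case Leaf then show ?case by (simp add: Fins_def)
next
  case (Node l y r)
  show ?case
  proof (cases "P = {}")
    case True then show ?thesis
      by (auto simp: Fins_def gins_def sg_def split: if_splits)
  next
    case False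
    with Node.prems have y: "y \<in> P" and sub: "P \<subseteq> insert y (set_tree l \<union> set_tree r)"
      and tl: "top_part (P \<inter> set_tree l) l" and tr: "top_part (P \<inter> set_tree r) r" by auto
    have hl: "hanging P l = hanging (P \<inter> set_tree l) l" by (rule hanging_cong) auto
    have hr: "hanging P r = hanging (P \<inter> set_tree r) r" by (rule hanging_cong) auto
    have xy: "x \<noteq> y" using Node.prems by auto
    show ?thesis
    proof (cases "x < y")
      case True
      have hil: "hanging P (tins x l) = hanging (P \<inter> set_tree l) (tins x l)"
        by (rule hanging_cong) (use Node.prems in auto)
      have IH: "hanging (P \<inter> set_tree l) (tins x l) = Fins (P \<inter> set_tree l) x (hanging (P \<inter> set_tree l) l)"
        using Node.IH(1)[OF _ tl] Node.prems by auto
      have sgl: "sg (P \<inter> set_tree l) x z \<longleftrightarrow> sg P x z" if "z \<in> set_tree l" for z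
      proof -
        have "\<forall>p\<in>P - set_tree l. x < p \<and> z < p" using sub Node.prems(1) True that by fastforce
        then show ?thesis unfolding sg_def by (metis Diff_iff Int_iff order.asym)
      qed
      have sgr: "\<not> sg P x z" if "z \<in> set_tree r" for z
        using y True that Node.prems(1) unfolding sg_def by force
      have g1: "gins (P \<inter> set_tree l) x H = gins P x H" if "H \<in> hanging P l" for H
      proof -
        have "(\<exists>z\<in>set_tree H. sg (P \<inter> set_tree l) x z) = (\<exists>z\<in>set_tree H. sg P x z)"
          using hanging_sub[OF that] sgl by blast
        then show ?thesis unfolding gins_def by simp
      qed
      have g2: "gins P x H = H" if "H \<in> hanging P r" for H
      proof -
        have "\<not>(\<exists>z\<in>set_tree H. sg P x z)"
          using hanging_sub[OF that] sgr by blast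
        then show ?thesis unfolding gins_def by simp
      qed
      have ex: "(\<exists>H\<in>hanging P l \<union> hanging P r. \<exists>z\<in>set_tree H. sg P x z) \<longleftrightarrow>
                (\<exists>H\<in>hanging P l. \<exists>z\<in>set_tree H. sg (P \<inter> set_tree l) x z)"
        using hanging_sub sgl sgr by blast
      have im: "gins P x ` (hanging P l \<union> hanging P r) = gins (P \<inter> set_tree l) x ` hanging P l \<union> hanging P r"
        using g1 g2 by (force simp: image_Un)
      show ?thesis using True y IH hil hl ex im by (simp add: Fins_def)
    next
      case False
      then have True': "y < x" using xy by auto
      have hir: "hanging P (tins x r) = hanging (P \<inter> set_tree r) (tins x r)"
        by (rule hanging_cong) (use Node.prems in auto)
      have IH: "hanging (P \<inter> set_tree r) (tins x r) = Fins (P \<inter> set_tree r) x (hanging (P \<inter> set_tree r) r)"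
        using Node.IH(2)[OF _ tr] Node.prems by auto
      have sgl: "sg (P \<inter> set_tree r) x z \<longleftrightarrow> sg P x z" if "z \<in> set_tree r" for z
      proof -
        have "\<forall>p\<in>P - set_tree r. p < x \<and> p < z" using sub Node.prems(1) True' that by fastforce
        then show ?thesis unfolding sg_def by (metis Diff_iff Int_iff)
      qed
      have sgr: "\<not> sg P x z" if "z \<in> set_tree l" for z
        using y True' that Node.prems(1) unfolding sg_def by force
      have g1: "gins (P \<inter> set_tree r) x H = gins P x H" if "H \<in> hanging P r" for H
      proof -
        have "(\<exists>z\<in>set_tree H. sg (P \<inter> set_tree r) x z) = (\<exists>z\<in>set_tree H. sg P x z)"
          using hanging_sub[OF that] sgl by blast
        then show ?thesis unfolding gins_def by simp
      qed
      have g2: "gins P x H = H" if "H \<in> hanging P l" for H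
      proof -
        have "\<not>(\<exists>z\<in>set_tree H. sg P x z)"
          using hanging_sub[OF that] sgr by blast
        then show ?thesis unfolding gins_def by simp
      qed
      have ex: "(\<exists>H\<in>hanging P l \<union> hanging P r. \<exists>z\<in>set_tree H. sg P x z) \<longleftrightarrow>
                (\<exists>H\<in>hanging P r. \<exists>z\<in>set_tree H. sg (P \<inter> set_tree r) x z)"
        using hanging_sub sgl sgr by blast
      have im: "gins P x ` (hanging P l \<union> hanging P r) = hanging P l \<union> gins (P \<inter> set_tree r) x ` hanging P r"
        using g1 g2 by (force simp: image_Un)
      show ?thesis using True' xy y IH hir hr ex im by (auto simp: Fins_def)
    qed
  qed
qed

fun dmax :: "'a tree \<Rightarrow> 'a tree" where
  "dmax Leaf = Leaf"
| "dmax (Node l y r) = (if r = Leaf then l else Node l y (dmax r))"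

fun tmax :: "'a tree \<Rightarrow> 'a" where
  "tmax Leaf = undefined"
| "tmax (Node l y r) = (if r = Leaf then y else tmax r)"

lemma set_dmax: "t \<noteq> Leaf \<Longrightarrow> set_tree t = insert (tmax t) (set_tree (dmax t))"
  by (induction t) auto

lemma tmax_in: "t \<noteq> Leaf \<Longrightarrow> tmax t \<in> set_tree t"
  using set_dmax by blast

lemma tmax_ge: "bst t \<Longrightarrow> z \<in> set_tree t \<Longrightarrow> z \<le> tmax t"
proof (induction t)
  case Leaf then show ?case by simp
next
  case (Node l y r)
  show ?case
  proof (cases "r = Leaf")
    case True then show ?thesis using Node by auto
  next
    case False
    then have "tmax r \<in> set_tree r" by (rule tmax_in)
    then show ?thesis using Node False by fastforce
  qed
qed

lemma dmax_less: "bst t \<Longrightarrow> t \<noteq> Leaf \<Longrightarrow> z \<in> set_tree (dmax t) \<Longrightarrow> z < tmax t"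
proof (induction t)
  case Leaf then show ?case by simp
next
  case (Node l y r)
  show ?case
  proof (cases "r = Leaf")
    case True then show ?thesis using Node by auto
  next
    case False
    then have "tmax r \<in> set_tree r" by (rule tmax_in)
    then show ?thesis using Node False set_dmax[OF False] by fastforce
  qed
qed

lemma bst_dmax: "bst t \<Longrightarrow> bst (dmax t)"
proof (induction t)
  case Leaf then show ?case by simp
next
  case (Node l y r)
  then show ?case
    by (cases "r = Leaf") (auto simp: set_dmax[of r])
qed

fun del :: "'a::linorder \<Rightarrow> 'a tree \<Rightarrow> 'a tree" where
  "del x Leaf = Leaf"
| "del x (Node l y r) = (if x < y then Node (del x l) y r else if y < x then Node l y (del x r)
     else (if l = Leaf then r else Node (dmax l) (tmax l) r))"

lemma set_del: "bst t \<Longrightarrow> set_tree (del x t) = set_tree t - {x}"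
proof (induction t)
  case Leaf then show ?case by simp
next
  case (Node l y r)
  show ?case
  proof (cases "x = y")
    case True
    then show ?thesis using Node set_dmax[of l] by (auto)
  next
    case False
    then show ?thesis using Node by auto
  qed
qed

lemma bst_del: "bst t \<Longrightarrow> bst (del x t)"
proof (induction t)
  case Leaf then show ?case by simp
next
  case (Node l y r)
  show ?case
  proof (cases "x = y")
    case True
    show ?thesis
    proof (cases "l = Leaf")
      case True then show ?thesis using Node \<open>x = y\<close> by auto
    next
      case False
      have m: "tmax l \<in> set_tree l" using tmax_in[OF False] .
      then show ?thesis using Node \<open>x = y\<close> False bst_dmax[of l] dmax_less[of l] by fastforce
    qed
  next
    case False
    then show ?thesis using Node by (auto simp: set_del)
  qed
qed

lemma del_notin: "x \<notin> set_tree t \<Longrightarrow> del x t = t"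
  by (induction t) auto

lemma hanging_nonleaf: "Leaf \<notin> hanging P t"
  using hanging_sub by blast

lemma hanging_empty: "hanging {} t = (if t = Leaf then {} else {t})"
  by (cases t) auto

lemma top_part_empty[simp]: "top_part {} t"
  by (cases t) auto

definition gd :: "'a set \<Rightarrow> 'a tree \<Rightarrow> 'a tree" where
  "gd A H = (if A \<inter> set_tree H = {} then H else dmax H)"

lemma hanging_dmax: "bst l \<Longrightarrow> top_part P l \<Longrightarrow> l \<noteq> Leaf \<Longrightarrow>
  top_part (P - {tmax l}) (dmax l) \<and> hanging (P - {tmax l}) (dmax l) = gd {tmax l} ` hanging P l - {Leaf}"
proof (induction l arbitrary: P)
  case Leaf then show ?case by simp
next
  case (Node ll y rr)
  show ?case
  proof (cases "P = {}")
    case True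
    have "tmax \<langle>ll, y, rr\<rangle> \<in> set_tree \<langle>ll, y, rr\<rangle>" by (rule tmax_in) simp
    then show ?thesis using True by (auto simp: hanging_empty gd_def)
  next
    case False
    with Node.prems have y: "y \<in> P" and sub: "P \<subseteq> insert y (set_tree ll \<union> set_tree rr)"
      and tl: "top_part (P \<inter> set_tree ll) ll" and tr: "top_part (P \<inter> set_tree rr) rr" by auto
    have hl: "hanging P ll = hanging (P \<inter> set_tree ll) ll" by (rule hanging_cong) auto
    have hr: "hanging P rr = hanging (P \<inter> set_tree rr) rr" by (rule hanging_cong) auto
    show ?thesis
    proof (cases "rr = Leaf")
      case True
      have e: "P - {y} = P \<inter> set_tree ll" using sub True Node.prems(1) by auto
      have g: "gd {y} H = H" if "H \<in> hanging P ll" for H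
        using hanging_sub[OF that] Node.prems(1) unfolding gd_def by fastforce
      have "hanging (P - {y}) ll = hanging P ll" by (rule hanging_cong) (use Node.prems(1) in fastforce)
      then show ?thesis using True e tl g y hanging_nonleaf[of P ll]
        by (force simp: image_iff)
    next
      case False
      let ?m = "tmax rr"
      have m: "?m \<in> set_tree rr" by (rule tmax_in[OF False])
      have my: "y < ?m" using m Node.prems(1) by auto
      have mll: "?m \<notin> set_tree ll" using m Node.prems(1) by fastforce
      have IH: "top_part ((P \<inter> set_tree rr) - {?m}) (dmax rr) \<and>
          hanging ((P \<inter> set_tree rr) - {?m}) (dmax rr) = gd {?m} ` hanging (P \<inter> set_tree rr) rr - {Leaf}"
        using Node.IH(2)[OF _ tr False] Node.prems(1) by auto
      have sd: "set_tree rr = insert ?m (set_tree (dmax rr))" by (rule set_dmax[OF False])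
      have tp: "top_part (P - {?m}) (Node ll y (dmax rr))"
      proof -
        have a: "(P - {?m}) \<inter> set_tree ll = P \<inter> set_tree ll" using mll by auto
        have b: "(P - {?m}) \<inter> set_tree (dmax rr) = (P \<inter> set_tree rr) - {?m}" using sd by auto
        show ?thesis using a b tl IH y my sub sd by auto
      qed
      have h1: "hanging (P - {?m}) ll = hanging P ll" by (rule hanging_cong) (use mll in auto)
      have h2: "hanging (P - {?m}) (dmax rr) = hanging ((P \<inter> set_tree rr) - {?m}) (dmax rr)"
        by (rule hanging_cong) (use sd in auto)
      have g: "gd {?m} H = H" if "H \<in> hanging P ll" for H
        using hanging_sub[OF that] mll unfolding gd_def by auto
      have "hanging (P - {?m}) (dmax \<langle>ll, y, rr\<rangle>) = hanging P ll \<union> (gd {?m} ` hanging P rr - {Leaf})"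
        using False y my h1 h2 IH hr by auto
      also have "\<dots> = gd {?m} ` hanging P \<langle>ll, y, rr\<rangle> - {Leaf}"
        using y g hanging_nonleaf[of P ll] by (force simp: image_Un)
      finally show ?thesis using tp False by simp
    qed
  qed
qed

lemma hanging_del1: "bst t \<Longrightarrow> top_part P t \<Longrightarrow> x \<notin> P \<Longrightarrow>
  top_part P (del x t) \<and> hanging P (del x t) = del x ` hanging P t - {Leaf}"
proof (induction t arbitrary: P)
  case Leaf then show ?case by simp
next
  case (Node l y r)
  show ?case
  proof (cases "P = {}")
    case True
    then show ?thesis by (auto simp: hanging_empty)
  next
    case False
    with Node.prems have y: "y \<in> P" and sub: "P \<subseteq> insert y (set_tree l \<union> set_tree r)"
      and tl: "top_part (P \<inter> set_tree l) l" and tr: "top_part (P \<inter> set_tree r) r" by auto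
    have hl: "hanging P l = hanging (P \<inter> set_tree l) l" by (rule hanging_cong) auto
    have hr: "hanging P r = hanging (P \<inter> set_tree r) r" by (rule hanging_cong) auto
    have xy: "x \<noteq> y" using Node.prems y by auto
    show ?thesis
    proof (cases "x < y")
      case True
      have IH: "top_part (P \<inter> set_tree l) (del x l) \<and> hanging (P \<inter> set_tree l) (del x l) = del x ` hanging (P \<inter> set_tree l) l - {Leaf}"
        using Node.IH(1)[OF _ tl] Node.prems by auto
      have sl: "set_tree (del x l) = set_tree l - {x}" using set_del Node.prems(1) by auto
      have e: "P \<inter> set_tree (del x l) = P \<inter> set_tree l" using sl Node.prems by auto
      have hdl: "hanging P (del x l) = hanging (P \<inter> set_tree l) (del x l)"
        by (rule hanging_cong) (use sl in auto)
      have g: "del x H = H" if "H \<in> hanging P r" for H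
        using hanging_sub[OF that] Node.prems(1) True by (intro del_notin) fastforce
      have "hanging P (del x \<langle>l, y, r\<rangle>) = (del x ` hanging P l - {Leaf}) \<union> hanging P r"
        using True y hdl IH hl by simp
      also have "\<dots> = del x ` hanging P \<langle>l, y, r\<rangle> - {Leaf}"
        using y g hanging_nonleaf[of P r] by (force simp: image_Un)
      finally show ?thesis using True y sub tr IH e sl by auto
    next
      case False
      then have T: "y < x" using xy by auto
      have IH: "top_part (P \<inter> set_tree r) (del x r) \<and> hanging (P \<inter> set_tree r) (del x r) = del x ` hanging (P \<inter> set_tree r) r - {Leaf}"
        using Node.IH(2)[OF _ tr] Node.prems by auto
      have sl: "set_tree (del x r) = set_tree r - {x}" using set_del Node.prems(1) by auto
      have e: "P \<inter> set_tree (del x r) = P \<inter> set_tree r" using sl Node.prems by auto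
      have hdl: "hanging P (del x r) = hanging (P \<inter> set_tree r) (del x r)"
        by (rule hanging_cong) (use sl in auto)
      have g: "del x H = H" if "H \<in> hanging P l" for H
        using hanging_sub[OF that] Node.prems(1) T by (intro del_notin) fastforce
      have "hanging P (del x \<langle>l, y, r\<rangle>) = hanging P l \<union> (del x ` hanging P r - {Leaf})"
      proof -
        have "del x \<langle>l, y, r\<rangle> = Node l y (del x r)" using T by (auto dest: order.asym)
        then show ?thesis using y hdl IH hr by simp
      qed
      also have "\<dots> = del x ` hanging P \<langle>l, y, r\<rangle> - {Leaf}"
        using y g hanging_nonleaf[of P l] by (force simp: image_Un)
      finally show ?thesis using T xy y sub tl IH e sl by auto
    qed
  qed
qed

definition pred :: "'a::linorder \<Rightarrow> 'a set \<Rightarrow> 'a set" where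
  "pred x S = {a \<in> S. a < x \<and> (\<forall>b\<in>S. b < x \<longrightarrow> b \<le> a)}"

lemma pred_sub: "pred x S \<subseteq> S" "a \<in> pred x S \<Longrightarrow> a < x"
  by (auto simp: pred_def)

lemma pred_unique: "a \<in> pred x S \<Longrightarrow> b \<in> pred x S \<Longrightarrow> a = b"
  by (auto simp: pred_def intro: order.antisym)

lemma pred_l: "bst (Node l y r) \<Longrightarrow> x < y \<Longrightarrow> pred x (set_tree (Node l y r)) = pred x (set_tree l)"
  unfolding pred_def by fastforce

lemma pred_r: "bst (Node l y r) \<Longrightarrow> y < x \<Longrightarrow>
   pred x (set_tree (Node l y r)) = (if pred x (set_tree r) = {} then {y} else pred x (set_tree r))"
proof -
  assume b: "bst (Node l y r)" and yx: "y < x"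
  show ?thesis
  proof (cases "\<exists>z\<in>set_tree r. z < x")
    case True
    let ?S = "{z \<in> set_tree r. z < x}"
    have f: "finite ?S" "?S \<noteq> {}" using True by auto
    have "Max ?S \<in> pred x (set_tree r)" using Max_in[OF f] Max_ge[OF f(1)] unfolding pred_def by auto
    then have ne: "pred x (set_tree r) \<noteq> {}" by auto
    have "pred x (set_tree (Node l y r)) = pred x (set_tree r)"
    proof (rule set_eqI, rule iffI)
      fix a assume a: "a \<in> pred x (set_tree (Node l y r))"
      from True obtain z where z: "z \<in> set_tree r" "z < x" by auto
      have "z \<le> a" using a z unfolding pred_def by auto
      then have "y < a" using z b by auto
      then have "a \<in> set_tree r" using a b unfolding pred_def by auto
      then show "a \<in> pred x (set_tree r)" using a unfolding pred_def by auto
    next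
      fix a assume a: "a \<in> pred x (set_tree r)"
      have ya: "y < a" using a b unfolding pred_def by auto
      have "\<forall>c\<in>set_tree (Node l y r). c < x \<longrightarrow> c \<le> a"
      proof
        fix c assume c: "c \<in> set_tree (Node l y r)"
        show "c < x \<longrightarrow> c \<le> a"
          using c a ya b unfolding pred_def by (auto; meson less_imp_le order.strict_trans)
      qed
      then show "a \<in> pred x (set_tree (Node l y r))" using a unfolding pred_def by auto
    qed
    then show ?thesis using ne by simp
  next
    case False
    then have "pred x (set_tree r) = {}" unfolding pred_def by auto
    moreover have "pred x (set_tree (Node l y r)) = {y}"
    proof -
      have "\<forall>c\<in>set_tree (Node l y r). c < x \<longrightarrow> c \<le> y" using False b by fastforce
      then have "y \<in> pred x (set_tree (Node l y r))" using yx unfolding pred_def by auto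
      then show ?thesis using pred_unique by blast
    qed
    ultimately show ?thesis by simp
  qed
qed

lemma pred_eq: "bst (Node l y r) \<Longrightarrow>
   pred y (set_tree (Node l y r)) = (if l = Leaf then {} else {tmax l})"
proof (cases "l = Leaf")
  case True
  assume "bst (Node l y r)"
  then show ?thesis using True unfolding pred_def by auto
next
  case False
  assume b: "bst (Node l y r)"
  have m: "tmax l \<in> set_tree l" using tmax_in[OF False] .
  have "pred y (set_tree (Node l y r)) = {tmax l}"
  proof -
    have "\<forall>c\<in>set_tree (Node l y r). c < y \<longrightarrow> c \<le> tmax l" using b tmax_ge[of l] by fastforce
    then have "tmax l \<in> pred y (set_tree (Node l y r))" using m b unfolding pred_def by auto
    then show ?thesis using pred_unique by blast
  qed
  then show ?thesis using False by simp
qed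

lemma hanging_del2: "bst t \<Longrightarrow> top_part P t \<Longrightarrow> x \<in> P \<Longrightarrow>
  top_part (P - {x} \<union> pred x (set_tree t)) (del x t) \<and>
  hanging (P - {x} \<union> pred x (set_tree t)) (del x t) = gd (pred x (set_tree t)) ` hanging P t - {Leaf}"
proof (induction t arbitrary: P)
  case Leaf then show ?case by simp
next
  case (Node l y r)
  have b: "bst (Node l y r)" by fact
  from Node.prems have y: "y \<in> P" and sub: "P \<subseteq> insert y (set_tree l \<union> set_tree r)"
    and tl: "top_part (P \<inter> set_tree l) l" and tr: "top_part (P \<inter> set_tree r) r" by auto
  have hl: "hanging P l = hanging (P \<inter> set_tree l) l" by (rule hanging_cong) auto
  have hr: "hanging P r = hanging (P \<inter> set_tree r) r" by (rule hanging_cong) auto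
  show ?case
  proof (cases "x < y")
    case True
    let ?A = "pred x (set_tree l)"
    have A: "pred x (set_tree (Node l y r)) = ?A" using pred_l[OF b True] .
    have xl: "x \<in> P \<inter> set_tree l"
    proof -
      have "x \<in> insert y (set_tree l \<union> set_tree r)" using Node.prems(3) sub by auto
      moreover have "x \<notin> set_tree r" using b True by (auto dest: order.asym)
      ultimately show ?thesis using True Node.prems(3) by auto
    qed
    have IH: "top_part ((P \<inter> set_tree l) - {x} \<union> ?A) (del x l) \<and>
       hanging ((P \<inter> set_tree l) - {x} \<union> ?A) (del x l) = gd ?A ` hanging (P \<inter> set_tree l) l - {Leaf}"
      using Node.IH(1)[OF _ tl xl] b by auto
    have Al: "?A \<subseteq> set_tree l" "\<And>a. a \<in> ?A \<Longrightarrow> a < x" using pred_sub by auto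
    have sl: "set_tree (del x l) = set_tree l - {x}" using set_del b by auto
    let ?Q = "P - {x} \<union> ?A"
    have e1: "?Q \<inter> set_tree (del x l) = (P \<inter> set_tree l) - {x} \<union> ?A" using sl Al by auto
    have yr: "y \<notin> set_tree l" "\<forall>z\<in>set_tree r. z \<notin> set_tree l" using b by fastforce+
    have e2: "?Q \<inter> set_tree r = P \<inter> set_tree r" using Al yr b True by fastforce
    have h1: "hanging ?Q (del x l) = hanging ((P \<inter> set_tree l) - {x} \<union> ?A) (del x l)"
      by (rule hanging_cong) (use e1 in blast)
    have h2: "hanging ?Q r = hanging P r"
      by (rule hanging_cong) (use e2 in blast)
    have g: "gd ?A H = H" if "H \<in> hanging P r" for H
    proof -
      have "?A \<inter> set_tree H = {}" using hanging_sub[OF that] Al(1) yr by blast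
      then show ?thesis unfolding gd_def by simp
    qed
    have yQ: "y \<in> ?Q" using y True by auto
    have dl: "del x \<langle>l, y, r\<rangle> = Node (del x l) y r" using True by simp
    have tp: "top_part ?Q (del x \<langle>l, y, r\<rangle>)"
      unfolding dl using yQ e1 e2 IH tr sub sl Al by auto
    have "hanging ?Q (del x \<langle>l, y, r\<rangle>) = (gd ?A ` hanging P l - {Leaf}) \<union> hanging P r"
      unfolding dl using yQ h1 h2 IH hl by simp
    also have "\<dots> = gd ?A ` hanging P \<langle>l, y, r\<rangle> - {Leaf}"
      using y g hanging_nonleaf[of P r] by (force simp: image_Un)
    finally show ?thesis using tp A by simp
  next
    case False
    show ?thesis
    proof (cases "y < x")
      case True
      let ?Ar = "pred x (set_tree r)"
      let ?A = "pred x (set_tree (Node l y r))"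
      have A: "?A = (if ?Ar = {} then {y} else ?Ar)" using pred_r[OF b True] .
      have xr: "x \<in> P \<inter> set_tree r"
      proof -
        have "x \<in> insert y (set_tree l \<union> set_tree r)" using Node.prems(3) sub by auto
        moreover have "x \<notin> set_tree l" using b True by (auto dest: order.asym)
        ultimately show ?thesis using True Node.prems(3) by auto
      qed
      have IH: "top_part ((P \<inter> set_tree r) - {x} \<union> ?Ar) (del x r) \<and>
         hanging ((P \<inter> set_tree r) - {x} \<union> ?Ar) (del x r) = gd ?Ar ` hanging (P \<inter> set_tree r) r - {Leaf}"
        using Node.IH(2)[OF _ tr xr] b by auto
      have Ar: "?Ar \<subseteq> set_tree r" "x \<notin> ?Ar" using pred_sub(1) pred_sub(2)[of x x] by auto
      have sl: "set_tree (del x r) = set_tree r - {x}" using set_del b by auto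
      let ?Q = "P - {x} \<union> ?A"
      have yr: "y \<notin> set_tree r" "y \<notin> set_tree l" "\<forall>z\<in>set_tree r. z \<notin> set_tree l" using b by fastforce+
      have e1: "?Q \<inter> set_tree (del x r) = (P \<inter> set_tree r) - {x} \<union> ?Ar" using sl Ar A yr by auto
      have e2: "?Q \<inter> set_tree l = P \<inter> set_tree l" using Ar yr A b True by auto
      have h1: "hanging ?Q (del x r) = hanging ((P \<inter> set_tree r) - {x} \<union> ?Ar) (del x r)"
        by (rule hanging_cong) (use e1 in blast)
      have h2: "hanging ?Q l = hanging P l"
        by (rule hanging_cong) (use e2 in blast)
      have g: "gd ?A H = H" if "H \<in> hanging P l" for H
        using hanging_sub[OF that] Ar yr A unfolding gd_def by auto
      have g2: "gd ?A H = gd ?Ar H" if "H \<in> hanging P r" for H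
        using hanging_sub[OF that] Ar yr A unfolding gd_def by auto
      have yQ: "y \<in> ?Q" using y True by auto
      have dl: "del x \<langle>l, y, r\<rangle> = Node l y (del x r)" using True by (auto dest: order.asym)
      have tp: "top_part ?Q (del x \<langle>l, y, r\<rangle>)"
        unfolding dl using yQ e1 e2 IH tl sub sl Ar A by auto
      have "hanging ?Q (del x \<langle>l, y, r\<rangle>) = hanging P l \<union> (gd ?Ar ` hanging P r - {Leaf})"
        unfolding dl using yQ h1 h2 IH hr by simp
      also have "\<dots> = gd ?A ` hanging P \<langle>l, y, r\<rangle> - {Leaf}"
        using y g g2 hanging_nonleaf[of P l] by (force simp: image_Un)
      finally show ?thesis using tp by simp
    next
      case False2: False
      then have xy: "x = y" using False by auto
      show ?thesis
      proof (cases "l = Leaf")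
        case True
        have A: "pred x (set_tree (Node l y r)) = {}" using pred_eq[OF b] True xy by simp
        have Q: "P - {x} \<union> {} = P \<inter> set_tree r" using sub xy True b by auto
        have "hanging (P \<inter> set_tree r) r = hanging P \<langle>l, y, r\<rangle>" using True y hr by simp
        moreover have "gd {} ` hanging P \<langle>l, y, r\<rangle> - {Leaf} = hanging P \<langle>l, y, r\<rangle>"
          using hanging_nonleaf[of P "\<langle>l, y, r\<rangle>"] by (force simp: gd_def)
        ultimately show ?thesis using A Q True xy tr by simp
      next
        case False3: False
        let ?m = "tmax l"
        have A: "pred x (set_tree (Node l y r)) = {?m}" using pred_eq[OF b] False3 xy by simp
        have m: "?m \<in> set_tree l" by (rule tmax_in[OF False3])
        have sd: "set_tree l = insert ?m (set_tree (dmax l))" by (rule set_dmax[OF False3])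
        have mdl: "?m \<notin> set_tree (dmax l)" using dmax_less[of l] b False3 by auto
        have D: "top_part ((P \<inter> set_tree l) - {?m}) (dmax l) \<and>
           hanging ((P \<inter> set_tree l) - {?m}) (dmax l) = gd {?m} ` hanging (P \<inter> set_tree l) l - {Leaf}"
          using hanging_dmax[OF _ tl False3] b by auto
        let ?Q = "P - {x} \<union> {?m}"
        have yr: "y \<notin> set_tree l" "y \<notin> set_tree r" "\<forall>z\<in>set_tree r. z \<notin> set_tree l" "?m \<notin> set_tree r"
          using b m by fastforce+
        have e1: "?Q \<inter> set_tree (dmax l) = (P \<inter> set_tree l) - {?m}" using sd mdl xy yr by auto
        have e2: "?Q \<inter> set_tree r = P \<inter> set_tree r" using yr xy by auto
        have h1: "hanging ?Q (dmax l) = hanging ((P \<inter> set_tree l) - {?m}) (dmax l)"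
          by (rule hanging_cong) (use e1 in blast)
        have h2: "hanging ?Q r = hanging P r"
          by (rule hanging_cong) (use e2 in blast)
        have g: "gd {?m} H = H" if "H \<in> hanging P r" for H
          using hanging_sub[OF that] yr unfolding gd_def by auto
        have dl: "del x \<langle>l, y, r\<rangle> = Node (dmax l) ?m r" using xy False3 by simp
        have tp: "top_part ?Q (del x \<langle>l, y, r\<rangle>)"
          unfolding dl using e1 e2 D tr sub sd xy by auto
        have "hanging ?Q (del x \<langle>l, y, r\<rangle>) = (gd {?m} ` hanging P l - {Leaf}) \<union> hanging P r"
          unfolding dl using h1 h2 D hl by simp
        also have "\<dots> = gd {?m} ` hanging P \<langle>l, y, r\<rangle> - {Leaf}"
          using y g hanging_nonleaf[of P r] by (force simp: image_Un)
        finally show ?thesis using tp A by simp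
      qed
    qed
  qed
qed

lemma step_ins: "bst_step s T T' c \<Longrightarrow> bst T \<Longrightarrow> x \<notin> set_tree T \<Longrightarrow> bst_step s (tins x T) (tins x T') c"
proof -
  assume st: "bst_step s T T' c" and b: "bst T" and x: "x \<notin> set_tree T"
  then obtain P where P: "s \<in> P" "top_part P T" "top_part P T'" "hanging P T' = hanging P T"
    "bst T'" "set_tree T' = set_tree T" "c = card P" unfolding bst_step_def by blast
  have xP: "x \<notin> P" using top_part_sub[OF P(2)] x by auto
  have "hanging P (tins x T') = Fins P x (hanging P T')"
    using hanging_tins[OF P(5) P(3)] x P(6) xP by auto
  moreover have "hanging P (tins x T) = Fins P x (hanging P T)"
    using hanging_tins[OF b P(2) x xP] .
  ultimately have h: "hanging P (tins x T') = hanging P (tins x T)" using P(4) by simp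
  show ?thesis unfolding bst_step_def
    using P h top_part_tins[OF P(2) xP] top_part_tins[OF P(3) xP] bst_tins[OF P(5)] by auto
qed

lemma serve_ins: "serve T S c \<Longrightarrow> bst T \<Longrightarrow> x \<notin> set_tree T \<Longrightarrow> serve (tins x T) S c"
proof (induction rule: serve.induct)
  case (serve_Nil T) show ?case by (rule serve.serve_Nil)
next
  case (serve_Cons s T T' c ss k)
  have "bst T'" "set_tree T' = set_tree T" using serve_Cons.hyps(1) unfolding bst_step_def by auto
  then show ?case using serve_Cons step_ins by (metis serve.serve_Cons)
qed

lemma step_del: "bst_step s T T' c \<Longrightarrow> bst T \<Longrightarrow> x \<noteq> s \<Longrightarrow> \<exists>c'\<le>c. bst_step s (del x T) (del x T') c'"
proof -
  assume st: "bst_step s T T' c" and b: "bst T" and xs: "x \<noteq> s"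
  then obtain P where P: "s \<in> P" "top_part P T" "top_part P T'" "hanging P T' = hanging P T"
    "bst T'" "set_tree T' = set_tree T" "c = card P" unfolding bst_step_def by blast
  have fin: "finite P" using top_part_sub[OF P(2)] finite_set_tree[of T] finite_subset by blast
  have sd: "set_tree (del x T') = set_tree (del x T)" using set_del[OF b] set_del[OF P(5)] P(6) by simp
  have bd: "bst (del x T')" using bst_del P(5) by auto
  show ?thesis
  proof (cases "x \<in> P")
    case False
    have "top_part P (del x T) \<and> hanging P (del x T) = del x ` hanging P T - {Leaf}"
      using hanging_del1[OF b P(2) False] .
    moreover have "top_part P (del x T') \<and> hanging P (del x T') = del x ` hanging P T' - {Leaf}"
      using hanging_del1[OF P(5) P(3) False] .
    ultimately have "bst_step s (del x T) (del x T') c"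
      unfolding bst_step_def using P sd bd by auto
    then show ?thesis by auto
  next
    case True
    let ?A = "pred x (set_tree T)"
    let ?Q = "P - {x} \<union> ?A"
    have "top_part ?Q (del x T) \<and> hanging ?Q (del x T) = gd ?A ` hanging P T - {Leaf}"
      using hanging_del2[OF b P(2) True] .
    moreover have "top_part ?Q (del x T') \<and> hanging ?Q (del x T') = gd ?A ` hanging P T' - {Leaf}"
      using hanging_del2[OF P(5) P(3) True] P(6) by simp
    ultimately have st': "bst_step s (del x T) (del x T') (card ?Q)"
      unfolding bst_step_def using P sd bd xs by (intro conjI exI[of _ ?Q]) auto
    have "card ?Q \<le> card P"
    proof (cases "?A = {}")
      case True2: True
      then show ?thesis using fin by (simp add: card_mono)
    next
      case False
      then obtain a where a: "a \<in> ?A" by auto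
      then have "?A = {a}" using pred_unique by blast
      then have "card ?Q = card (insert a (P - {x}))" by simp
      also have "\<dots> \<le> Suc (card (P - {x}))" using card_insert_le_m1 fin
        by (metis card_insert_if finite_Diff le_SucI le_refl)
      also have "\<dots> = card P" using True fin by (metis card_Suc_Diff1)
      finally show ?thesis .
    qed
    then show ?thesis using st' P(7) by blast
  qed
qed

lemma serve_del: "serve T S c \<Longrightarrow> bst T \<Longrightarrow> x \<notin> set S \<Longrightarrow> \<exists>c'\<le>c. serve (del x T) S c'"
proof (induction rule: serve.induct)
  case (serve_Nil T) then show ?case using serve.serve_Nil by blast
next
  case (serve_Cons s T T' c ss k)
  have bT': "bst T'" using serve_Cons.hyps(1) unfolding bst_step_def by auto
  obtain k' where k': "k' \<le> k" "serve (del x T') ss k'" using serve_Cons bT' by auto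
  obtain c' where c': "c' \<le> c" "bst_step s (del x T) (del x T') c'"
    using step_del[OF serve_Cons.hyps(1) serve_Cons.prems(1)] serve_Cons.prems(2) by auto
  have "serve (del x T) (s # ss) (c' + k')" by (rule serve.serve_Cons[OF c'(2) k'(2)])
  then show ?case using c'(1) k'(1) by (intro exI[of _ "c' + k'"]) auto
qed

lemma OPT_keys_insert: "x \<notin> K \<Longrightarrow> set S \<subseteq> K \<Longrightarrow> OPT_keys (insert x K) S = OPT_keys K S"
proof -
  assume xK: "x \<notin> K" and SK: "set S \<subseteq> K"
  let ?A = "serve_costs K S" and ?B = "serve_costs (insert x K) S"
  have AB: "?A \<subseteq> ?B"
  proof
    fix c assume "c \<in> ?A"
    then obtain T where T: "bst T" "set_tree T = K" "serve T S c" unfolding serve_costs_def by auto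
    have "serve (tins x T) S c" using serve_ins[OF T(3) T(1)] T(2) xK by auto
    moreover have "bst (tins x T)" "set_tree (tins x T) = insert x K" using bst_tins[OF T(1)] T(2) by auto
    ultimately show "c \<in> ?B" unfolding serve_costs_def by blast
  qed
  have BA: "\<exists>a\<in>?A. a \<le> b" if "b \<in> ?B" for b
  proof -
    from that obtain T where T: "bst T" "set_tree T = insert x K" "serve T S b" unfolding serve_costs_def by auto
    obtain c' where c': "c' \<le> b" "serve (del x T) S c'" using serve_del[OF T(3) T(1)] xK SK by auto
    have "set_tree (del x T) = K" using set_del[OF T(1)] T(2) xK by auto
    then have "c' \<in> ?A" unfolding serve_costs_def using bst_del[OF T(1)] c'(2) by auto
    then show ?thesis using c'(1) by auto
  qed
  show ?thesis
  proof (cases "?B = {}")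
    case True
    then have "?A = {}" using AB by auto
    then show ?thesis using True unfolding OPT_keys_def by simp
  next
    case False
    have "Inf ?B \<in> ?B" using False by (rule Inf_nat_def1)
    then obtain a where a: "a \<in> ?A" "a \<le> Inf ?B" using BA by blast
    have ne: "?A \<noteq> {}" using a by auto
    have "Inf ?A \<le> a" using a(1) by (rule cInf_lower) simp
    moreover have "Inf ?B \<le> Inf ?A" using Inf_nat_def1[OF ne] AB by (intro cInf_lower) auto
    ultimately show ?thesis unfolding OPT_keys_def using a(2) by simp
  qed
qed

theorem mainTheorem15:
  fixes n :: nat and S :: "rat list" and X :: "rat set"
  assumes "set S \<subseteq> nset n"
    and "finite X"
    and "X \<inter> nset n = {}"
  shows "OPT n S = OPT_X n X S"
proof -
  have "OPT_keys (nset n \<union> X) S = OPT_keys (nset n) S"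
    using assms(2,3)
  proof (induction X rule: finite_induct)
    case empty then show ?case by simp
  next
    case (insert x F)
    have "nset n \<union> insert x F = insert x (nset n \<union> F)" by auto
    moreover have "x \<notin> nset n \<union> F" using insert by auto
    ultimately show ?case using OPT_keys_insert[of x "nset n \<union> F" S] insert assms(1) by auto
  qed
  then show ?thesis unfolding OPT_def OPT_X_def by simp
qed

end
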